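(* Let $f$ be a $C^\infty$ function on $\mathbb R$ with no flat zero (for every $x$ with $f(x)=0$ there exists $r\in\mathbb N$ with $f^{(r)}(x)\neq0$), and let $a<b$ with $f(a)f(b)\neq0$. Then the number of zeros of $f$ in $[a,b]$ (counted without multiplicity) is finite and $$\mathcal H^0(\{f=0\}\cap[a,b])=\frac1\pi\Big[\arctan\frac{f'(b)}{f(b)}-\arctan\frac{f'(a)}{f(a)}+\int_a^b\frac{f'(x)^2-f(x)f''(x)}{f(x)^2+f'(x)^2}\,dx\Big].$$
   Context: $\mathcal H^0(\{f=0\}\cap[a,b])$ denotes the number of distinct zeros of $f$ in $[a,b]$. *)

theory Defs
  imports "HOL-Analysis.Analysis"
begin

definition smooth_real :: "(real \<Rightarrow> real) \<Rightarrow> bool" where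
  "smooth_real f \<longleftrightarrow> (\<forall>n x. ((deriv ^^ n) f) differentiable (at x))"

definition no_flat_zero :: "(real \<Rightarrow> real) \<Rightarrow> bool" where
  "no_flat_zero f \<longleftrightarrow> (\<forall>x. f x = 0 \<longrightarrow> (\<exists>r::nat. (deriv ^^ r) f x \<noteq> 0))"

end

theory Submission
  imports Defs
begin
lemma sm_deriv:
  assumes "smooth_real f"
  shows "((deriv ^^ n) f has_real_derivative (deriv ^^ Suc n) f x) (at x)"
  using assms unfolding smooth_real_def
  by (simp add: DERIV_deriv_iff_real_differentiable)

lemma sm_taylor:
  assumes sm: "smooth_real f" and jr: "j \<le> r" and z: "\<forall>i<r. (deriv ^^ i) f z = 0" and yz: "y \<noteq> z"
  shows "\<exists>t. \<bar>t - z\<bar> \<le> \<bar>y - z\<bar> \<and>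
     (deriv ^^ j) f y = (deriv ^^ r) f t / fact (r - j) * (y - z) ^ (r - j)"
proof (cases "j = r")
  case True
  then show ?thesis by (intro exI[of _ y]) simp
next
  case False
  then have n: "r - j > 0" using jr by simp
  have D: "\<forall>m t. m < r - j \<and> min y z \<le> t \<and> t \<le> max y z \<longrightarrow>
     DERIV (\<lambda>x. (deriv ^^ (j + m)) f x) t :> (deriv ^^ (j + Suc m)) f t"
    using sm_deriv[OF sm] by simp
  obtain t where t: "(if y < z then y < t \<and> t < z else z < t \<and> t < y)"
    and eq: "(deriv ^^ (j + 0)) f y = (\<Sum>m<r - j. ((deriv ^^ (j + m)) f z / fact m) * (y - z)^m)
        + ((deriv ^^ (j + (r - j))) f t / fact (r - j)) * (y - z)^(r - j)"
    using Taylor[of "r - j" "\<lambda>m x. (deriv ^^ (j + m)) f x" "(deriv ^^ (j + 0)) f" "min y z" "max y z" z y, OF n refl D]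
      yz by auto
  have "(\<Sum>m<r - j. ((deriv ^^ (j + m)) f z / fact m) * (y - z)^m) = 0"
    using z by (intro sum.neutral) auto
  with eq jr have "(deriv ^^ j) f y = (deriv ^^ r) f t / fact (r - j) * (y - z)^(r - j)" by simp
  moreover have "\<bar>t - z\<bar> \<le> \<bar>y - z\<bar>" using t by (auto split: if_splits)
  ultimately show ?thesis by blast
qed

lemma near_c:
  fixes x c :: real
  assumes "\<bar>x - c\<bar> < \<bar>c\<bar>/2"
  shows "x * c > 0 \<and> \<bar>x\<bar> < 3/2 * \<bar>c\<bar> \<and> \<bar>x\<bar> > \<bar>c\<bar>/2"
  using assms by (cases "c \<ge> 0"; cases "x \<ge> 0") (auto simp: abs_if mult_pos_pos mult_neg_neg split: if_splits)

lemma sm_zero_local: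
  assumes sm: "smooth_real f" and nf: "no_flat_zero f" and fz: "f z = 0"
  shows "\<exists>e>0. \<forall>y. y \<noteq> z \<and> \<bar>y - z\<bar> < e \<longrightarrow> f y \<noteq> 0 \<and> deriv f y \<noteq> 0 \<and>
     (z < y \<longrightarrow> f y / deriv f y > 0) \<and> (y < z \<longrightarrow> f y / deriv f y < 0) \<and>
     \<bar>f y / deriv f y\<bar> \<le> 3 * \<bar>y - z\<bar>"
proof -
  define D where "D = (\<lambda>n. (deriv ^^ n) f)"
  have ex: "\<exists>r. D r z \<noteq> 0" using nf fz unfolding no_flat_zero_def D_def by blast
  define r where "r = (LEAST r. D r z \<noteq> 0)"
  have rz: "D r z \<noteq> 0" unfolding r_def using ex by (rule LeastI_ex)
  have below: "\<forall>i<r. D i z = 0" unfolding r_def using not_less_Least by blast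
  have "r \<noteq> 0" using rz fz by (cases r) (auto simp: D_def)
  then obtain s where rs: "r = Suc s" by (cases r) auto
  define c where "c = D r z"
  have "isCont (D r) z" unfolding D_def using sm_deriv[OF sm] by (rule DERIV_isCont)
  then have "D r \<midarrow>z\<rightarrow> c" unfolding c_def isCont_def .
  moreover have "\<bar>c\<bar>/2 > 0" using rz c_def by simp
  ultimately obtain e where e: "e > 0" and he: "\<And>x. x \<noteq> z \<and> norm (x - z) < e \<Longrightarrow> norm (D r x - c) < \<bar>c\<bar>/2"
    unfolding LIM_eq by blast
  have ht: "\<bar>t - z\<bar> < e \<Longrightarrow> D r t * c > 0 \<and> \<bar>D r t\<bar> < 3/2 * \<bar>c\<bar> \<and> \<bar>D r t\<bar> > \<bar>c\<bar>/2" for t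
  proof -
    assume "\<bar>t - z\<bar> < e"
    then have "\<bar>D r t - c\<bar> < \<bar>c\<bar>/2" using he[of t] \<open>\<bar>c\<bar>/2 > 0\<close> by (cases "t = z") (auto simp: c_def)
    then show ?thesis by (rule near_c)
  qed
  show ?thesis
  proof (intro exI[of _ e] conjI[OF e] allI impI)
    fix y assume y: "y \<noteq> z \<and> \<bar>y - z\<bar> < e"
    show "f y \<noteq> 0 \<and> deriv f y \<noteq> 0 \<and>
     (z < y \<longrightarrow> f y / deriv f y > 0) \<and> (y < z \<longrightarrow> f y / deriv f y < 0) \<and>
     \<bar>f y / deriv f y\<bar> \<le> 3 * \<bar>y - z\<bar>"
    proof -
    obtain t where t: "\<bar>t - z\<bar> \<le> \<bar>y - z\<bar>" and ft: "D 0 y = D r t / fact (r - 0) * (y - z) ^ (r - 0)"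
      using sm_taylor[OF sm, of 0 r z y] below y unfolding D_def by auto
    obtain t' where t': "\<bar>t' - z\<bar> \<le> \<bar>y - z\<bar>" and gt: "D 1 y = D r t' / fact (r - 1) * (y - z) ^ (r - 1)"
      using sm_taylor[OF sm, of 1 r z y] below y rs unfolding D_def by auto
    have a1: "D r t * c > 0" "\<bar>D r t\<bar> < 3/2 * \<bar>c\<bar>" using ht[of t] t y by auto
    have a2: "D r t' * c > 0" "\<bar>D r t'\<bar> > \<bar>c\<bar>/2" using ht[of t'] t' y by auto
    have fy: "f y = D r t / fact (Suc s) * (y - z) ^ Suc s" using ft rs by (simp add: D_def)
    have gy: "deriv f y = D r t' / fact s * (y - z) ^ s" using gt rs by (simp add: D_def)
    have nz: "D r t \<noteq> 0" "D r t' \<noteq> 0" "y - z \<noteq> 0" using a1 a2 y by auto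
    define q where "q = D r t / (real (Suc s) * D r t')"
    have P: "(y - z) ^ s \<noteq> 0" "(fact s :: real) \<noteq> 0" using nz by auto
    have fy': "f y = ((y - z) * D r t / real (Suc s)) * ((y - z) ^ s / fact s)"
      unfolding fy by (simp add: fact_Suc field_simps)
    have gy': "deriv f y = D r t' * ((y - z) ^ s / fact s)" unfolding gy by simp
    have W: "(y - z) ^ s / fact s \<noteq> 0" using P by simp
    have u: "f y / deriv f y = (y - z) * q"
    proof -
      have "f y / deriv f y = ((y - z) * D r t / real (Suc s)) / D r t'"
        unfolding fy' gy' using W by (rule mult_divide_mult_cancel_right)
      also have "\<dots> = (y - z) * q" unfolding q_def by simp
      finally show ?thesis .
    qed
    have prod: "D r t * D r t' > 0"
    proof -
      have "(D r t * c) * (D r t' * c) > 0" using a1 a2 by simp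
      then have "(D r t * D r t') * (c * c) > 0" by (simp add: algebra_simps)
      moreover have "c * c > 0" using rz c_def by (metis not_real_square_gt_zero)
      ultimately show ?thesis by (simp add: zero_less_mult_iff)
    qed
    have qpos: "q > 0" unfolding q_def using prod
      by (auto simp add: zero_less_divide_iff zero_less_mult_iff mult_pos_neg)
    have "\<bar>D r t\<bar> < 3 * \<bar>D r t'\<bar>" using a1 a2 by linarith
    then have "\<bar>D r t\<bar> / \<bar>D r t'\<bar> < 3" using nz by (simp add: divide_less_eq)
    moreover have "\<bar>q\<bar> \<le> \<bar>D r t\<bar> / \<bar>D r t'\<bar>" unfolding q_def using nz
      by (simp add: abs_mult divide_simps)
    ultimately have q3: "q < 3" using qpos by linarith
    have "f y \<noteq> 0" using fy nz by simp
    moreover have "deriv f y \<noteq> 0" using gy nz by simp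
    moreover have "z < y \<longrightarrow> f y / deriv f y > 0" using u qpos by simp
    moreover have "y < z \<longrightarrow> f y / deriv f y < 0" using u qpos by (simp add: mult_neg_pos)
    moreover have "\<bar>f y / deriv f y\<bar> \<le> 3 * \<bar>y - z\<bar>" using u qpos q3
      by (simp add: abs_mult mult_right_mono mult.commute[of "\<bar>y - z\<bar>"])
    ultimately show ?thesis by blast
    qed
  qed
qed

theorem corollary3:
  fixes f :: "real \<Rightarrow> real" and a b :: real
  assumes "smooth_real f"
    and "no_flat_zero f"
    and "a < b"
    and "f a * f b \<noteq> 0"
  shows "finite {x \<in> {a..b}. f x = 0}
    \<and> (\<lambda>x. ((deriv f x)\<^sup>2 - f x * deriv (deriv f) x) / ((f x)\<^sup>2 + (deriv f x)\<^sup>2))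
         integrable_on {a..b}
    \<and> real (card {x \<in> {a..b}. f x = 0}) =
       (1 / pi) * (arctan (deriv f b / f b) - arctan (deriv f a / f a)
         + integral {a..b} (\<lambda>x. ((deriv f x)\<^sup>2 - f x * deriv (deriv f) x)
                                 / ((f x)\<^sup>2 + (deriv f x)\<^sup>2)))"
proof -
  note sm = assms(1) and nf = assms(2)
  define Z where "Z = {x \<in> {a..b}. f x = 0}"
  define F where "F = (\<lambda>x. ((deriv f x)\<^sup>2 - f x * deriv (deriv f) x) / ((f x)\<^sup>2 + (deriv f x)\<^sup>2))"
  have df: "\<And>x. (f has_real_derivative deriv f x) (at x)"
    using sm_deriv[OF sm, of 0] by simp
  have ddf: "\<And>x. (deriv f has_real_derivative deriv (deriv f) x) (at x)"
    using sm_deriv[OF sm, of 1] by simp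
  have fc: "\<And>x. isCont f x" using df by (rule DERIV_isCont)
  have fa: "f a \<noteq> 0" and fb: "f b \<noteq> 0" using assms(4) by auto
  have finZ: "finite Z"
  proof (rule ccontr)
    assume inf: "infinite Z"
    have "closed {x. f x = 0}"
      by (rule closed_Collect_eq) (auto intro: continuous_at_imp_continuous_on fc)
    moreover have "Z = {a..b} \<inter> {x. f x = 0}" unfolding Z_def by auto
    ultimately have "compact Z"
      using compact_Int_closed[OF compact_Icc, of "{x. f x = 0}" a b] by simp
    then obtain x where xZ: "x \<in> Z" and lim: "x islimpt Z"
      using Heine_Borel_imp_Bolzano_Weierstrass[of Z Z] inf by blast
    then have "f x = 0" unfolding Z_def by simp
    then obtain e where e: "e > 0" and he: "\<And>y. y \<noteq> x \<and> \<bar>y - x\<bar> < e \<Longrightarrow> f y \<noteq> 0"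
      using sm_zero_local[OF sm nf] by blast
    obtain x' where "x' \<in> Z" "x' \<noteq> x" "dist x' x < e" using lim e unfolding islimpt_approachable by blast
    then show False using he[of x'] unfolding Z_def by (simp add: dist_real_def)
  qed
  define N where "N = (\<lambda>x. card {w \<in> Z. w < x})"
  define Phi where "Phi = (\<lambda>x. pi * real (N x) + (if f x = 0 then pi/2 else - arctan (deriv f x / f x)))"
  have der: "(Phi has_real_derivative F x) (at x)" if fx: "f x \<noteq> 0" for x
  proof -
    obtain e1 where e1: "e1 > 0" "\<And>y. dist x y < e1 \<Longrightarrow> f y \<noteq> 0"
      using continuous_at_avoid[of x f 0] fc fx by (auto simp: isCont_def continuous_at)
    obtain e2 where e2: "e2 > 0" "\<And>w. w \<in> Z \<Longrightarrow> w \<noteq> x \<Longrightarrow> e2 \<le> dist x w"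
      using finite_set_avoid[OF finZ, of x] by blast
    have xZ: "x \<notin> Z" using fx Z_def by auto
    have ev: "eventually (\<lambda>y. Phi y = pi * real (N x) - arctan (deriv f y / f y)) (nhds x)"
      unfolding eventually_nhds_metric
    proof (intro exI[of _ "min e1 e2"] conjI allI impI)
      show "min e1 e2 > 0" using e1 e2 by simp
      fix y assume y: "dist y x < min e1 e2"
      have "f y \<noteq> 0" using e1(2)[of y] y by (simp add: dist_commute)
      moreover have "{w \<in> Z. w < y} = {w \<in> Z. w < x}"
      proof -
        have "w < y \<longleftrightarrow> w < x" if "w \<in> Z" for w
        proof -
          have "e2 \<le> \<bar>x - w\<bar>" using e2(2)[OF that] xZ that by (auto simp: dist_real_def)
          moreover have "\<bar>y - x\<bar> < e2" using y by (simp add: dist_real_def)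
          ultimately show ?thesis by linarith
        qed
        then show ?thesis by blast
      qed
      ultimately show "Phi y = pi * real (N x) - arctan (deriv f y / f y)"
        unfolding Phi_def N_def by simp
    qed
    define g where "g = deriv f x"
    define h where "h = deriv (deriv f) x"
    have h1: "((\<lambda>y. deriv f y / f y) has_real_derivative ((h * f x - g * g) / (f x * f x))) (at x)"
      unfolding g_def h_def by (rule DERIV_divide[OF ddf df fx])
    have "((\<lambda>y. pi * real (N x) - arctan (deriv f y / f y)) has_real_derivative
        0 - inverse (1 + (deriv f y / f y)\<^sup>2) * ((h * f x - g * g) / (f x * f x))) (at x)" if "y = x" for y
      using DERIV_diff[OF DERIV_const DERIV_chain2[OF DERIV_arctan h1]] that by simp
    then have d1: "((\<lambda>y. pi * real (N x) - arctan (deriv f y / f y)) has_real_derivative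
        0 - inverse (1 + (g / f x)\<^sup>2) * ((h * f x - g * g) / (f x * f x))) (at x)" unfolding g_def by simp
    have pos: "(f x)\<^sup>2 + g\<^sup>2 > 0" using fx by (simp add: add_pos_nonneg)
    have i1: "inverse (1 + (g / f x)\<^sup>2) = (f x)\<^sup>2 / ((f x)\<^sup>2 + g\<^sup>2)"
      using fx pos by (simp add: field_simps power2_eq_square)
    have "0 - inverse (1 + (g / f x)\<^sup>2) * ((h * f x - g * g) / (f x * f x)) = (g\<^sup>2 - f x * h) / ((f x)\<^sup>2 + g\<^sup>2)"
    proof -
      have ff: "f x * f x \<noteq> 0" using fx by simp
      have "(f x)\<^sup>2 / ((f x)\<^sup>2 + g\<^sup>2) * ((h * f x - g * g) / (f x * f x))
          = (h * f x - g * g) / ((f x)\<^sup>2 + g\<^sup>2)"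
        using ff by (simp add: power2_eq_square)
      then show ?thesis unfolding i1 by (simp add: power2_eq_square diff_divide_distrib)
    qed
    also have "\<dots> = F x" unfolding F_def g_def h_def by simp
    finally have eqF: "0 - inverse (1 + (g / f x)\<^sup>2) * ((h * f x - g * g) / (f x * f x)) = F x" .
    have "((\<lambda>y. pi * real (N x) - arctan (deriv f y / f y)) has_real_derivative F x) (at x)"
      using d1 unfolding eqF .
    then show ?thesis using DERIV_cong_ev[OF refl ev refl] by simp
  qed
  have contz: "isCont Phi z" if zZ: "z \<in> Z" for z
  proof -
    have fz: "f z = 0" using zZ Z_def by simp
    obtain e where e: "e > 0" and he: "\<And>y. y \<noteq> z \<and> \<bar>y - z\<bar> < e \<Longrightarrow> f y \<noteq> 0 \<and> deriv f y \<noteq> 0 \<and>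
     (z < y \<longrightarrow> f y / deriv f y > 0) \<and> (y < z \<longrightarrow> f y / deriv f y < 0) \<and>
     \<bar>f y / deriv f y\<bar> \<le> 3 * \<bar>y - z\<bar>"
      using sm_zero_local[OF sm nf fz] by blast
    obtain e2 where e2: "e2 > 0" "\<And>w. w \<in> Z \<Longrightarrow> w \<noteq> z \<Longrightarrow> e2 \<le> dist z w"
      using finite_set_avoid[OF finZ, of z] by blast
    define u where "u = (\<lambda>y. f y / deriv f y)"
    have ev: "eventually (\<lambda>y. Phi y = pi * real (N z) + pi/2 + arctan (u y)) (nhds z)"
      unfolding eventually_nhds_metric
    proof (intro exI[of _ "min e e2"] conjI allI impI)
      show "min e e2 > 0" using e e2 by simp
      fix y assume y: "dist y z < min e e2"
      show "Phi y = pi * real (N z) + pi/2 + arctan (u y)"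
      proof (cases "y = z")
        case True then show ?thesis using fz by (simp add: Phi_def u_def)
      next
        case False
        have hy: "f y \<noteq> 0" "deriv f y \<noteq> 0" "z < y \<longrightarrow> u y > 0" "y < z \<longrightarrow> u y < 0"
          using he[of y] False y by (auto simp: dist_real_def u_def)
        have inv: "deriv f y / f y = 1 / u y" unfolding u_def by simp
        have uy: "u y \<noteq> 0" using hy by (auto simp: u_def)
        have near: "w < y \<longleftrightarrow> w < z" if "w \<in> Z" "w \<noteq> z" for w
        proof -
          have "e2 \<le> \<bar>z - w\<bar>" using e2(2)[OF that] by (auto simp: dist_real_def)
          moreover have "\<bar>y - z\<bar> < e2" using y by (simp add: dist_real_def)
          ultimately show ?thesis by linarith
        qed
        show ?thesis
        proof (cases "z < y")
          case True
          have "{w \<in> Z. w < y} = insert z {w \<in> Z. w < z}" using near True zZ by auto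
          then have "N y = Suc (N z)" unfolding N_def using finZ by simp
          moreover have "u y > 0" using hy True by simp
          ultimately show ?thesis using hy(1) Transcendental.arctan_inverse[OF uy]
            unfolding Phi_def inv by (simp add: algebra_simps)
        next
          case False
          then have yz: "y < z" using \<open>y \<noteq> z\<close> by simp
          have "{w \<in> Z. w < y} = {w \<in> Z. w < z}" using near yz by auto
          then have "N y = N z" unfolding N_def by simp
          moreover have "u y < 0" using hy yz by simp
          ultimately show ?thesis using hy(1) Transcendental.arctan_inverse[OF uy]
            unfolding Phi_def inv by (simp add: algebra_simps)
        qed
      qed
    qed
    have "u \<midarrow>z\<rightarrow> 0"
      unfolding LIM_eq
    proof (intro allI impI)
      fix r :: real assume r: "r > 0"
      show "\<exists>s>0. \<forall>x. x \<noteq> z \<and> norm (x - z) < s \<longrightarrow> norm (u x - 0) < r"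
      proof (intro exI[of _ "min e (r/4)"] conjI allI impI)
        show "min e (r/4) > 0" using e r by simp
        fix x assume x: "x \<noteq> z \<and> norm (x - z) < min e (r/4)"
        then have "\<bar>u x\<bar> \<le> 3 * \<bar>x - z\<bar>" using he[of x] by (auto simp: u_def)
        then show "norm (u x - 0) < r" using x r by simp
      qed
    qed
    moreover have "u z = 0" using fz by (simp add: u_def)
    ultimately have "isCont u z" unfolding isCont_def by simp
    then have "isCont (\<lambda>y. pi * real (N z) + pi/2 + arctan (u y)) z"
      by (intro continuous_intros)
    then show ?thesis using isCont_cong[OF ev] by simp
  qed
  have cont: "continuous_on {a..b} Phi"
  proof (rule continuous_at_imp_continuous_on, intro ballI)
    fix x assume x: "x \<in> {a..b}"
    show "isCont Phi x"
    proof (cases "f x = 0")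
      case True then show ?thesis using contz x Z_def by simp
    next
      case False then show ?thesis using der DERIV_isCont by blast
    qed
  qed
  have hi: "(F has_integral (Phi b - Phi a)) {a..b}"
  proof (rule fundamental_theorem_of_calculus_interior_strong[OF finZ])
    show "a \<le> b" using assms(3) by simp
    show "continuous_on {a..b} Phi" by (rule cont)
    fix x assume "x \<in> {a<..<b} - Z"
    then have "f x \<noteq> 0" unfolding Z_def by auto
    then show "(Phi has_vector_derivative F x) (at x)"
      using der has_real_derivative_iff_has_vector_derivative by blast
  qed
  have Nb: "N b = card Z"
  proof -
    have "{w \<in> Z. w < b} = Z" using fb unfolding Z_def by (auto simp: less_le)
    then show ?thesis unfolding N_def by simp
  qed
  have Na: "N a = 0"
  proof -
    have e0: "{w \<in> Z. w < a} = {}" unfolding Z_def by auto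
    show ?thesis unfolding N_def e0 by simp
  qed
  have "integral {a..b} F = pi * card Z - arctan (deriv f b / f b) + arctan (deriv f a / f a)"
    using integral_unique[OF hi] Nb Na fa fb unfolding Phi_def by simp
  moreover have "F integrable_on {a..b}" using hi by blast
  ultimately show ?thesis using finZ unfolding Z_def[symmetric] F_def[symmetric]
    by (simp add: field_simps)
qed

end
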